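(* Let $\lambda\in\mathbb C$ with $\lambda\ne1$ and $\Re(\lambda)>0$, and let $Z$ be a complex random variable with $\mathbb E|Z|<\infty$, $\mathbb EZ\ne0$ and $Z\overset{\mathcal L}{=}e^{-\lambda T}(Z^{(1)}+\dots+Z^{(m)})$, where $Z^{(1)},\dots,Z^{(m)}$ are independent copies of $Z$ independent of $T$. Let $\varphi(t)=\mathbb E e^{i\langle t,Z\rangle}$ ($t\in\mathbb C$) and $\psi(r)=\max_{|t|=r}|\varphi(t)|$ for $r\ge0$. Then for every $a\in\,]0,1/\Re(\lambda)[$, $\psi(r)=O(r^{-a})$ as $r\to\infty$.
   Context: $m\ge2$ is an integer. $T=\tau_{(1)}+\dots+\tau_{(m-1)}$ where the $\tau_{(j)}$ are independent and $\tau_{(j)}$ is exponential with parameter $j$. For $x,y\in\mathbb C$, $\langle x,y\rangle=\Re(\overline xy)$. *)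

theory Defs
  imports "HOL-Probability.Probability" "HOL-Library.Landau_Symbols"
begin

definition T_law :: "nat \<Rightarrow> real measure" where
  "T_law m = distr (PiM {1..m-1} (\<lambda>j. density lborel (exponential_density (real j))))
                   borel (\<lambda>x. \<Sum>j\<in>{1..m-1}. x j)"

definition fixpoint_rhs_law :: "nat \<Rightarrow> complex \<Rightarrow> complex measure \<Rightarrow> complex measure" where
  "fixpoint_rhs_law m lam \<mu> = distr (T_law m \<Otimes>\<^sub>M PiM {1..m} (\<lambda>_. \<mu>)) borel
      (\<lambda>(t, zs). exp (- lam * complex_of_real t) * (\<Sum>j\<in>{1..m}. zs j))"

definition cinner :: "complex \<Rightarrow> complex \<Rightarrow> real" where
  "cinner x y = Re (cnj x * y)"

end

theory Submission
  imports Defs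
begin

lemma exp_mgf_hasint:
  fixes l c :: real assumes l: "0 < l" and c: "c < l"
  shows "has_bochner_integral lborel (\<lambda>x. exponential_density l x * exp (c*x)) (l/(l-c))"
proof (rule has_bochner_integral_nn_integral)
  show "(\<lambda>x. exponential_density l x * exp (c * x)) \<in> borel_measurable lborel" by simp
  show "0 \<le> l/(l-c)" using l c by simp
  show "AE x in lborel. 0 \<le> exponential_density l x * exp (c * x)"
    using l by (auto simp: exponential_density_def)
  have "((\<lambda>x. l * exp (-(l-c)*x)) has_integral l * (exp (-(l-c)*0)/(l-c))) {0..}"
    using has_integral_exp_minus_to_infinity[of "l-c" 0] c
    by (intro has_integral_mult_right) auto
  then have "((\<lambda>x. l * exp (-(l-c)*x)) has_integral l/(l-c)) {0..}" by simp
  then have "((\<lambda>x. if x \<in> {0..} then l * exp (-(l-c)*x) else 0) has_integral l/(l-c)) UNIV"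
    by (subst has_integral_restrict_UNIV)
  moreover have "(\<lambda>x. if x \<in> {0..} then l * exp (-(l-c)*x) else 0) = (\<lambda>x. exponential_density l x * exp (c * x))"
    by (auto simp: exponential_density_def fun_eq_iff mult.assoc exp_add[symmetric] algebra_simps)
  ultimately have "((\<lambda>x. exponential_density l x * exp (c * x)) has_integral l/(l-c)) UNIV" by simp
  then show "(\<integral>\<^sup>+ x. ennreal (exponential_density l x * exp (c * x)) \<partial>lborel) = ennreal (l/(l-c))"
    by (intro nn_integral_has_integral_lborel) (use l in \<open>auto simp: exponential_density_def\<close>)
qed


definition Ed :: "nat \<Rightarrow> real measure" where
  "Ed j = density lborel (exponential_density (real (max j 1)))"

lemma prob_Ed: "prob_space (Ed j)"
  unfolding Ed_def by (rule prob_space_exponential_density) simp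

interpretation ED: product_sigma_finite Ed
  unfolding product_sigma_finite_def
  by (intro allI prob_space_imp_sigma_finite prob_Ed)

lemma sets_Ed[measurable_cong, simp]: "sets (Ed j) = sets borel"
  by (simp add: Ed_def)

lemma space_Ed[simp]: "space (Ed j) = UNIV"
  by (simp add: Ed_def)

lemma TL_eq: "T_law m = distr (PiM {1..m-1} Ed) borel (\<lambda>x. \<Sum>j\<in>{1..m-1}. x j)"
  unfolding T_law_def
  by (rule arg_cong[where f="\<lambda>N. distr N borel _"], rule PiM_cong) (auto simp: Ed_def max_def)

lemma prob_PiEd: "prob_space (PiM I Ed)"
  by (rule prob_space_PiM) (rule prob_Ed)

lemma TL_prob: "prob_space (T_law m)"
  unfolding TL_eq by (rule prob_space.prob_space_distr[OF prob_PiEd]) simp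

lemma TL_sets[measurable_cong, simp]: "sets (T_law m) = sets borel"
  by (simp add: TL_eq)

lemma TL_space[simp]: "space (T_law m) = UNIV"
  by (simp add: TL_eq)

lemma TL_AE_nonneg: "AE s in T_law m. 0 \<le> s"
proof -
  have "AE x in PiM {1..m-1} Ed. \<forall>j\<in>{1..m-1}. 0 \<le> x j"
  proof (subst AE_ball_countable)
    show "countable {1..m-1}" by simp
    show "\<forall>j\<in>{1..m - 1}. AE x in Pi\<^sub>M {1..m - 1} Ed. 0 \<le> x j"
    proof
      fix j assume j: "j \<in> {1..m-1}"
      have "AE x in Ed j. 0 \<le> x"
        unfolding Ed_def
        by (subst AE_density) (auto simp: exponential_density_def intro!: AE_I2)
      then show "AE x in Pi\<^sub>M {1..m - 1} Ed. 0 \<le> x j"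
        by (rule AE_PiM_component[OF prob_Ed j])
    qed
  qed
  then have "AE x in PiM {1..m-1} Ed. 0 \<le> (\<Sum>j\<in>{1..m-1}. x j)"
    by eventually_elim (auto intro: sum_nonneg)
  then show ?thesis unfolding TL_eq
    by (subst AE_distr_iff) auto
qed

lemma Ed_mgf:
  assumes c: "c < 1"
  shows "integrable (Ed j) (\<lambda>x. exp (c*x))" "integral\<^sup>L (Ed j) (\<lambda>x. exp (c*x)) = real (max j 1) / (real (max j 1) - c)"
proof -
  have l: "0 < real (max j 1)" "c < real (max j 1)" using c by auto
  note h = exp_mgf_hasint[OF l]
  show "integrable (Ed j) (\<lambda>x. exp (c*x))"
    unfolding Ed_def using h[unfolded has_bochner_integral_iff]
    by (subst integrable_density) (auto simp: exponential_density_nonneg)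
  show "integral\<^sup>L (Ed j) (\<lambda>x. exp (c*x)) = real (max j 1) / (real (max j 1) - c)"
    unfolding Ed_def using h[unfolded has_bochner_integral_iff]
    by (subst integral_density) (auto simp: exponential_density_nonneg)
qed

lemma TL_mgf:
  assumes c: "c < 1"
  shows "integrable (T_law m) (\<lambda>t. exp (c * t))"
    "integral\<^sup>L (T_law m) (\<lambda>t. exp (c * t)) = (\<Prod>j\<in>{1..m-1}. real j / (real j - c))"
proof -
  have eq: "\<And>x. exp (c * (\<Sum>j\<in>{1..m-1}. x j)) = (\<Prod>j\<in>{1..m-1}. exp (c * x j))"
    by (auto simp: sum_distrib_left exp_sum)
  have int: "integrable (PiM {1..m-1} Ed) (\<lambda>x. \<Prod>j\<in>{1..m-1}. exp (c * x j))"
    by (rule ED.product_integrable_prod) (auto intro: Ed_mgf[OF c])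
  have int': "integrable (PiM {1..m-1} Ed) (\<lambda>x. exp (c * (\<Sum>j\<in>{1..m-1}. x j)))"
    using int unfolding eq .
  show "integrable (T_law m) (\<lambda>t. exp (c * t))"
    unfolding TL_eq by (rule integrable_distr_eq[THEN iffD2], measurable, rule int')
  have "integral\<^sup>L (T_law m) (\<lambda>t. exp (c * t)) = (\<integral>x. (\<Prod>j\<in>{1..m-1}. exp (c * x j)) \<partial>PiM {1..m-1} Ed)"
    unfolding TL_eq by (subst integral_distr, measurable, simp only: eq)
  also have "\<dots> = (\<Prod>j\<in>{1..m-1}. integral\<^sup>L (Ed j) (\<lambda>x. exp (c*x)))"
    by (rule ED.product_integral_prod) (auto intro: Ed_mgf[OF c])
  also have "\<dots> = (\<Prod>j\<in>{1..m-1}. real j / (real j - c))"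
    by (rule prod.cong) (auto simp: Ed_mgf[OF c] max_def)
  finally show "integral\<^sup>L (T_law m) (\<lambda>t. exp (c * t)) = (\<Prod>j\<in>{1..m-1}. real j / (real j - c))" .
qed

lemma Ed_interval_pos:
  assumes "0 \<le> a" "a < b"
  shows "0 < emeasure (Ed j) {a<..b}"
proof -
  define l where "l = real (max j 1)"
  have l: "0 < l" by (simp add: l_def)
  interpret prob_space "Ed j" by (rule prob_Ed)
  have "emeasure (Ed j) {a<..b} = emeasure (Ed j) ({..b} - {..a})"
    by (rule arg_cong[where f="emeasure _"]) auto
  also have "\<dots> = emeasure (Ed j) {..b} - emeasure (Ed j) {..a}"
    using assms by (intro emeasure_Diff) auto
  also have "\<dots> = ennreal (erlang_CDF 0 l b) - ennreal (erlang_CDF 0 l a)"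
    unfolding Ed_def l_def[symmetric] using l by (simp add: emeasure_erlang_density)
  also have "\<dots> = ennreal (erlang_CDF 0 l b - erlang_CDF 0 l a)"
    using l by (intro ennreal_minus) (auto simp: erlang_CDF_def)
  finally have e: "emeasure (Ed j) {a<..b} = ennreal (erlang_CDF 0 l b - erlang_CDF 0 l a)" .
  have "erlang_CDF 0 l a < erlang_CDF 0 l b"
  proof -
    have "exp (- l * b) < exp (- l * a)" using l assms by simp
    then show ?thesis using assms by (simp add: erlang_CDF_def)
  qed
  then show ?thesis unfolding e by simp
qed

lemma prod_pos_ennreal:
  fixes f :: "'b \<Rightarrow> ennreal"
  shows "(\<And>a. a \<in> A \<Longrightarrow> 0 < f a) \<Longrightarrow> 0 < prod f A"
  by (induct A rule: infinite_finite_induct) (auto simp: ennreal_zero_less_mult_iff)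

lemma TL_interval_pos:
  assumes m: "m \<ge> 2" and ab: "0 \<le> a" "a < b"
  shows "0 < emeasure (T_law m) {a<..b}"
proof -
  define n where "n = real (m - 1)"
  have n: "0 < n" using m by (simp add: n_def)
  let ?B = "PiE {1..m-1} (\<lambda>_. {a/n<..b/n})"
  have sub: "?B \<subseteq> (\<lambda>x. \<Sum>j\<in>{1..m-1}. x j) -` {a<..b} \<inter> space (PiM {1..m-1} Ed)"
  proof
    fix x assume x: "x \<in> ?B"
    have "a = (\<Sum>j\<in>{1..m-1}. a/n)" using n by (simp add: n_def)
    also have "\<dots> < (\<Sum>j\<in>{1..m-1}. x j)"
      using x m by (intro sum_strict_mono) auto
    finally have 1: "a < (\<Sum>j\<in>{1..m-1}. x j)" .
    have "(\<Sum>j\<in>{1..m-1}. x j) \<le> (\<Sum>j\<in>{1..m-1}. b/n)"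
      using x by (intro sum_mono) auto
    also have "\<dots> = b" using n by (simp add: n_def)
    finally have 2: "(\<Sum>j\<in>{1..m-1}. x j) \<le> b" .
    from 1 2 show "x \<in> (\<lambda>x. \<Sum>j\<in>{1..m-1}. x j) -` {a<..b} \<inter> space (PiM {1..m-1} Ed)"
      using x by (auto simp: space_PiM PiE_def Pi_def)
  qed
  have "0 < (\<Prod>j\<in>{1..m-1}. emeasure (Ed j) {a/n<..b/n})"
    using ab n by (intro prod_pos_ennreal Ed_interval_pos) (auto simp: divide_strict_right_mono)
  also have "\<dots> = emeasure (PiM {1..m-1} Ed) ?B"
    by (rule ED.emeasure_PiM[symmetric]) auto
  also have "\<dots> \<le> emeasure (PiM {1..m-1} Ed) ((\<lambda>x. \<Sum>j\<in>{1..m-1}. x j) -` {a<..b} \<inter> space (PiM {1..m-1} Ed))"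
    by (rule emeasure_mono[OF sub]) measurable
  also have "\<dots> = emeasure (T_law m) {a<..b}"
    unfolding TL_eq by (subst emeasure_distr) auto
  finally show ?thesis .
qed


lemma cinner_bound: "\<bar>cinner t z\<bar> \<le> cmod t * cmod z"
  unfolding cinner_def by (metis abs_Re_le_cmod complex_mod_cnj norm_mult)

lemma cinner_scale: "cinner (complex_of_real e * w) z = e * cinner w z"
  unfolding cinner_def by (simp add: algebra_simps)

lemma cinner_diff: "cinner t z - cinner u z = cinner (t - u) z"
  unfolding cinner_def by (simp add: algebra_simps)

lemma iexp_lip: "cmod (iexp x - iexp y) \<le> \<bar>x - y\<bar>"
proof -
  have "iexp x - iexp y = iexp y * (iexp (x - y) - 1)"
    by (simp add: algebra_simps flip: exp_add)
  then have "cmod (iexp x - iexp y) = cmod (iexp (x - y) - 1)"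
    by (simp add: norm_mult)
  also have "\<dots> \<le> \<bar>x - y\<bar>"
    using iexp_approx1[of "x - y" 0] by simp
  finally show ?thesis .
qed

lemma norm_iexp[simp]: "cmod (iexp x) = 1"
  by (simp add: norm_exp_i_times)

locale fp =
  fixes M :: "'a measure" and Z :: "'a \<Rightarrow> complex" and m :: nat and lam :: complex
  assumes m2: "m \<ge> 2" and lam1: "lam \<noteq> 1" and rpos: "Re lam > 0"
    and PM: "prob_space M"
    and Zm[measurable]: "Z \<in> borel_measurable M"
    and Zi: "integrable M Z"
    and mean: "(\<integral>x. Z x \<partial>M) \<noteq> 0"
    and fixp: "distr M borel Z = fixpoint_rhs_law m lam (distr M borel Z)"
begin

interpretation prob_space M by (rule PM)

definition ch :: "complex \<Rightarrow> complex" where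
  "ch t = (\<integral>x. iexp (cinner t (Z x)) \<partial>M)"

definition mu :: complex where "mu = (\<integral>x. Z x \<partial>M)"
definition K :: real where "K = (\<integral>x. cmod (Z x) \<partial>M)"

lemma K_nonneg: "0 \<le> K" unfolding K_def by simp

lemma meas_iexp[measurable]: "(\<lambda>x. iexp (cinner t (Z x))) \<in> borel_measurable M"
  unfolding cinner_def by measurable

lemma int_iexp: "integrable M (\<lambda>x. iexp (cinner t (Z x)))"
  by (rule integrable_const_bound[of _ 1]) auto

lemma ch_le1: "cmod (ch t) \<le> 1"
proof -
  have "cmod (ch t) \<le> (\<integral>x. cmod (iexp (cinner t (Z x))) \<partial>M)"
    unfolding ch_def by (rule integral_norm_bound)
  also have "\<dots> = 1" by (simp add: prob_space)
  finally show ?thesis .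
qed

lemma ch0: "ch 0 = 1"
  by (simp add: ch_def cinner_def prob_space)

lemma ch_lip: "cmod (ch t - ch u) \<le> K * cmod (t - u)"
proof -
  have "ch t - ch u = (\<integral>x. iexp (cinner t (Z x)) - iexp (cinner u (Z x)) \<partial>M)"
    unfolding ch_def by (subst Bochner_Integration.integral_diff) (auto intro: int_iexp)
  then have "cmod (ch t - ch u) \<le> (\<integral>x. cmod (iexp (cinner t (Z x)) - iexp (cinner u (Z x))) \<partial>M)"
    by (simp add: integral_norm_bound)
  also have "\<dots> \<le> (\<integral>x. cmod (t - u) * cmod (Z x) \<partial>M)"
  proof (rule integral_mono_AE')
    show "integrable M (\<lambda>x. cmod (t - u) * cmod (Z x))"
      using Zi by auto
    show "AE x in M. cmod (iexp (cinner t (Z x)) - iexp (cinner u (Z x))) \<le> cmod (t - u) * cmod (Z x)"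
    proof (intro AE_I2)
      fix x
      have "cmod (iexp (cinner t (Z x)) - iexp (cinner u (Z x))) \<le> \<bar>cinner t (Z x) - cinner u (Z x)\<bar>"
        by (rule iexp_lip)
      also have "\<dots> \<le> cmod (t - u) * cmod (Z x)"
        unfolding cinner_diff by (rule cinner_bound)
      finally show "cmod (iexp (cinner t (Z x)) - iexp (cinner u (Z x))) \<le> cmod (t - u) * cmod (Z x)" .
    qed
    show "AE x in M. 0 \<le> cmod (t - u) * cmod (Z x)" by simp
  qed
  also have "\<dots> = K * cmod (t - u)" by (simp add: K_def)
  finally show ?thesis .
qed

lemma ch_cont: "continuous_on UNIV ch"
proof (rule lipschitz_on_continuous_on)
  show "K-lipschitz_on UNIV ch"
    using ch_lip K_nonneg by (intro lipschitz_onI) (auto simp: dist_norm)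
qed

lemma ch_isCont: "isCont ch t"
  using ch_cont by (simp add: continuous_on_eq_continuous_at)

lemma ell: "(\<integral>x. cinner w (Z x) \<partial>M) = cinner w mu"
proof -
  have "bounded_linear (\<lambda>z. cinner w z)"
    unfolding cinner_def
    by (intro bounded_linear_compose[OF bounded_linear_Re] bounded_linear_mult_right)
  then show ?thesis unfolding mu_def by (rule integral_bounded_linear[OF _ Zi])
qed

lemma ch_deriv:
  assumes e: "e \<longlonglongrightarrow> 0" and e0: "\<And>n. e n \<noteq> 0"
  shows "(\<lambda>n. (ch (of_real (e n) * w) - 1) / of_real (e n)) \<longlonglongrightarrow> \<i> * of_real (cinner w mu)"
proof -
  define c where "c x = cinner w (Z x)" for x
  have cm[measurable]: "c \<in> borel_measurable M" unfolding c_def cinner_def by measurable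
  define s where "s n x = (iexp (e n * c x) - 1 - \<i> * of_real (e n * c x)) / of_real (e n)" for n x
  have sm[measurable]: "s n \<in> borel_measurable M" for n unfolding s_def by measurable
  have bnd: "cmod (s n x) \<le> 2 * cmod w * cmod (Z x)" for n x
  proof -
    have "cmod (iexp (e n * c x) - 1 - \<i> * of_real (e n * c x)) \<le> 2 * \<bar>e n * c x\<bar>"
      using iexp_approx2[of "e n * c x" 1] by (simp add: algebra_simps)
    then have "cmod (s n x) \<le> 2 * \<bar>e n * c x\<bar> / \<bar>e n\<bar>"
      unfolding s_def norm_divide using e0[of n] by (simp add: divide_right_mono)
    also have "\<dots> = 2 * \<bar>c x\<bar>" using e0[of n] by (simp add: abs_mult)
    also have "\<dots> \<le> 2 * cmod w * cmod (Z x)" using cinner_bound[of w "Z x"] by (simp add: c_def)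
    finally show ?thesis .
  qed
  have lim: "(\<lambda>n. s n x) \<longlonglongrightarrow> 0" for x
  proof -
    have b2: "cmod (s n x) \<le> \<bar>e n\<bar> * (c x)\<^sup>2 / 2" for n
    proof -
      have "cmod (iexp (e n * c x) - 1 - \<i> * of_real (e n * c x)) \<le> \<bar>e n * c x\<bar>^2 / 2"
        using iexp_approx1[of "e n * c x" 1] by (simp add: algebra_simps power2_eq_square)
      then have "cmod (s n x) \<le> \<bar>e n * c x\<bar>^2 / 2 / \<bar>e n\<bar>"
        unfolding s_def norm_divide norm_of_real by (rule divide_right_mono) simp
      also have "\<dots> = \<bar>e n\<bar> * (c x)\<^sup>2 / 2" using e0[of n] by (simp add: power2_eq_square abs_mult)
      finally show ?thesis .
    qed
    have "(\<lambda>n. \<bar>e n\<bar> * (c x)\<^sup>2 / 2) \<longlonglongrightarrow> 0 * (c x)\<^sup>2 / 2"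
      using e by (intro tendsto_intros) (auto intro: tendsto_rabs_zero)
    then have "(\<lambda>n. \<bar>e n\<bar> * (c x)\<^sup>2 / 2) \<longlonglongrightarrow> 0" by simp
    then show ?thesis
      by (rule Lim_null_comparison[rotated]) (use b2 in \<open>auto intro: always_eventually\<close>)
  qed
  have "(\<lambda>n. integral\<^sup>L M (s n)) \<longlonglongrightarrow> integral\<^sup>L M (\<lambda>x. 0)"
    by (rule integral_dominated_convergence[where w="\<lambda>x. 2 * cmod w * cmod (Z x)"])
       (use Zi bnd lim in auto)
  then have I0: "(\<lambda>n. integral\<^sup>L M (s n)) \<longlonglongrightarrow> 0" by simp
  have eqI: "integral\<^sup>L M (s n) = (ch (of_real (e n) * w) - 1) / of_real (e n) - \<i> * of_real (cinner w mu)" for n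
  proof -
    have ic: "integrable M c" unfolding c_def cinner_def
      using integrable_bounded_linear[OF bounded_linear_compose[OF bounded_linear_Re bounded_linear_mult_right] Zi] .
    have "integral\<^sup>L M (s n) = (\<integral>x. iexp (e n * c x) - 1 - \<i> * of_real (e n * c x) \<partial>M) / of_real (e n)"
      unfolding s_def by simp
    also have "(\<integral>x. iexp (e n * c x) - 1 - \<i> * of_real (e n * c x) \<partial>M) =
        (\<integral>x. iexp (e n * c x) \<partial>M) - (\<integral>x. 1 \<partial>M) - (\<integral>x. \<i> * of_real (e n * c x) \<partial>M)"
    proof -
      have i1: "integrable M (\<lambda>x. iexp (e n * c x))"
        using int_iexp[of "of_real (e n) * w"] by (simp add: c_def cinner_scale)
      have i2: "integrable M (\<lambda>x. \<i> * complex_of_real (e n * c x))"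
        using ic by simp
      show ?thesis
        using i1 i2 by (simp add: Bochner_Integration.integral_diff)
    qed
    also have "(\<integral>x. iexp (e n * c x) \<partial>M) = ch (of_real (e n) * w)"
      unfolding ch_def c_def cinner_scale ..
    also have "(\<integral>x. \<i> * of_real (e n * c x) \<partial>M) = \<i> * of_real (e n * cinner w mu)"
      using ell[of w] by (simp add: c_def)
    finally show ?thesis using e0[of n] by (simp add: prob_space field_simps)
  qed
  have "(\<lambda>n. integral\<^sup>L M (s n) + \<i> * of_real (cinner w mu)) \<longlonglongrightarrow> 0 + \<i> * of_real (cinner w mu)"
    using I0 by (intro tendsto_intros)
  then show ?thesis by (simp add: eqI)
qed

end

context fp
begin

interpretation prob_space M by (rule PM)

definition cc :: "real \<Rightarrow> complex" where "cc s = exp (- cnj lam * of_real s)"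

abbreviation "muZ \<equiv> distr M borel Z"
abbreviation "P \<equiv> T_law m"

lemma muZ_prob: "prob_space muZ"
  by (rule prob_space_distr) simp

interpretation PZ: product_sigma_finite "\<lambda>_::nat. muZ"
  unfolding product_sigma_finite_def
  by (intro allI prob_space_imp_sigma_finite muZ_prob)

lemma PiZ_prob: "prob_space (PiM {1..m} (\<lambda>_. muZ))"
  by (rule prob_space_PiM) (rule muZ_prob)

interpretation PP: pair_sigma_finite P "PiM {1..m} (\<lambda>_. muZ)"
  unfolding pair_sigma_finite_def
  by (intro conjI prob_space_imp_sigma_finite TL_prob PiZ_prob)

lemma cc_cont: "continuous_on UNIV cc"
  unfolding cc_def by (intro continuous_intros)

lemma norm_cc: "cmod (cc s) = exp (- Re lam * s)"
  unfolding cc_def by (simp add: norm_exp_eq_Re)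

lemma cinner_rot: "cinner t (exp (- lam * of_real s) * w) = cinner (cc s * t) w"
proof -
  have "cnj (cc s) = exp (- lam * of_real s)"
    unfolding cc_def by (simp add: exp_cnj)
  then show ?thesis unfolding cinner_def by (simp add: mult_ac)
qed

lemma cinner_sum: "cinner t (\<Sum>j\<in>A. f j) = (\<Sum>j\<in>A. cinner t (f j))"
  unfolding cinner_def by (simp add: sum_distrib_left Re_sum)

lemma ch_distr: "ch t = (\<integral>z. iexp (cinner t z) \<partial>muZ)"
  unfolding ch_def by (subst integral_distr) (auto simp: cinner_def)

lemma ch_meas[measurable]: "ch \<in> borel_measurable borel"
  by (rule borel_measurable_continuous_onI[OF ch_cont])

lemma F1: "ch t = (\<integral>s. (ch (cc s * t))^m \<partial>P)"
proof -
  define G where "G = (\<lambda>(s::real, zs::nat\<Rightarrow>complex). exp (- lam * complex_of_real s) * (\<Sum>j\<in>{1..m}. zs j))"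
  have cj: "(\<lambda>p. snd p j) \<in> borel_measurable (P \<Otimes>\<^sub>M PiM {1..m} (\<lambda>_. muZ))" if "j \<in> {1..m}" for j
  proof -
    have "(\<lambda>zs. zs j) \<in> measurable (PiM {1..m} (\<lambda>_. muZ)) muZ"
      using that by (rule measurable_component_singleton)
    then have "(\<lambda>zs. zs j) \<in> borel_measurable (PiM {1..m} (\<lambda>_. muZ))"
      by (simp add: measurable_def)
    then show ?thesis by (rule measurable_compose[OF measurable_snd])
  qed
  have G_alt: "G = (\<lambda>p. exp (- lam * complex_of_real (fst p)) * (\<Sum>j\<in>{1..m}. snd p j))"
    by (auto simp: G_def fun_eq_iff)
  have Gm[measurable]: "G \<in> borel_measurable (P \<Otimes>\<^sub>M PiM {1..m} (\<lambda>_. muZ))"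
  proof -
    have "(\<lambda>s. exp (- lam * complex_of_real s)) \<in> borel_measurable borel"
      by (intro borel_measurable_continuous_onI continuous_intros)
    then have "(\<lambda>s. exp (- lam * complex_of_real s)) \<in> borel_measurable P"
      by (simp cong: measurable_cong_sets)
    then have e: "(\<lambda>p. exp (- lam * complex_of_real (fst p))) \<in> borel_measurable (P \<Otimes>\<^sub>M PiM {1..m} (\<lambda>_. muZ))"
      by (rule measurable_compose[OF measurable_fst])
    show ?thesis unfolding G_alt
      by (intro borel_measurable_times borel_measurable_sum cj e) auto
  qed
  have "ch t = (\<integral>z. iexp (cinner t z) \<partial>fixpoint_rhs_law m lam muZ)"
    by (simp add: ch_distr flip: fixp)
  also have "\<dots> = (\<integral>p. iexp (cinner t (G p)) \<partial>(P \<Otimes>\<^sub>M PiM {1..m} (\<lambda>_. muZ)))"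
    unfolding fixpoint_rhs_law_def G_def[symmetric]
    by (subst integral_distr[OF Gm]) (auto simp: cinner_def)
  also have "\<dots> = (\<integral>s. (\<integral>zs. iexp (cinner t (G (s, zs))) \<partial>PiM {1..m} (\<lambda>_. muZ)) \<partial>P)"
  proof (rule PP.integral_fst'[symmetric])
    interpret pr: prob_space "P \<Otimes>\<^sub>M PiM {1..m} (\<lambda>_. muZ)"
      by (intro prob_space_pair TL_prob PiZ_prob)
    show "integrable (P \<Otimes>\<^sub>M PiM {1..m} (\<lambda>_. muZ)) (\<lambda>p. iexp (cinner t (G p)))"
    proof (rule pr.integrable_const_bound[of _ 1])
      show "(\<lambda>p. iexp (cinner t (G p))) \<in> borel_measurable (P \<Otimes>\<^sub>M PiM {1..m} (\<lambda>_. muZ))"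
        using Gm unfolding cinner_def by measurable
    qed simp
  qed
  also have "\<dots> = (\<integral>s. (ch (cc s * t))^m \<partial>P)"
  proof (rule Bochner_Integration.integral_cong[OF refl])
    fix s
    have "(\<integral>zs. iexp (cinner t (G (s, zs))) \<partial>PiM {1..m} (\<lambda>_. muZ))
        = (\<integral>zs. (\<Prod>j\<in>{1..m}. iexp (cinner (cc s * t) (zs j))) \<partial>PiM {1..m} (\<lambda>_. muZ))"
    proof (rule Bochner_Integration.integral_cong[OF refl])
      fix zs
      show "iexp (cinner t (G (s, zs))) = (\<Prod>j\<in>{1..m}. iexp (cinner (cc s * t) (zs j)))"
        by (simp only: G_def case_prod_conv cinner_rot cinner_sum of_real_sum sum_distrib_left exp_sum[OF finite_atLeastAtMost])
    qed
    also have "\<dots> = (\<Prod>j\<in>{1..m}. (\<integral>z. iexp (cinner (cc s * t) z) \<partial>muZ))"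
    proof (rule PZ.product_integral_prod)
      interpret mz: prob_space muZ by (rule muZ_prob)
      show "\<And>i. i \<in> {1..m} \<Longrightarrow> integrable muZ (\<lambda>z. iexp (cinner (cc s * t) z))"
        by (rule mz.integrable_const_bound[of _ 1]) (auto simp: cinner_def)
    qed simp
    also have "\<dots> = (ch (cc s * t))^m"
      by (simp add: ch_distr)
    finally show "(\<integral>zs. iexp (cinner t (G (s, zs))) \<partial>PiM {1..m} (\<lambda>_. muZ)) = (ch (cc s * t))^m" .
  qed
  finally show ?thesis .
qed

end

lemma prod_ratio_one: "(\<Prod>j\<in>{1..n}. real j / (real j + 1)) = 1 / (real n + 1)"
  by (induction n) (auto simp: field_simps)

lemma prod_ne:
  fixes r :: real assumes r: "0 < r" "r \<noteq> 1" and m: "m \<ge> 2"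
  shows "real m * (\<Prod>j\<in>{1..m-1}. real j / (real j + r)) \<noteq> 1"
proof -
  have one: "real m * (\<Prod>j\<in>{1..m-1}. real j / (real j + 1)) = 1"
    using m by (subst prod_ratio_one) (auto simp: of_nat_diff)
  have mem: "1 \<in> {1..m-1}" using m by auto
  show ?thesis
  proof (cases "r < 1")
    case True
    have "(\<Prod>j\<in>{1..m-1}. real j / (real j + 1)) < (\<Prod>j\<in>{1..m-1}. real j / (real j + r))"
      by (rule prod_mono_strict[OF mem]) (use True r in \<open>auto simp: frac_le divide_strict_left_mono\<close>)
    then show ?thesis using one m by (smt (verit, best) mult_strict_left_mono of_nat_0_less_iff not_numeral_le_zero zero_less_iff_neq_zero)
  next
    case False
    then have r1: "1 < r" using r by simp
    have "(\<Prod>j\<in>{1..m-1}. real j / (real j + r)) < (\<Prod>j\<in>{1..m-1}. real j / (real j + 1))"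
      by (rule prod_mono_strict[OF mem]) (use r1 r in \<open>auto simp: frac_le divide_strict_left_mono\<close>)
    then show ?thesis using one m by (smt (verit, best) mult_strict_left_mono of_nat_0_less_iff not_numeral_le_zero zero_less_iff_neq_zero)
  qed
qed

context fp
begin

interpretation prob_space M by (rule PM)
interpretation TP: prob_space P by (rule TL_prob)

lemma meas_P: "f \<in> borel_measurable borel \<Longrightarrow> f \<in> borel_measurable P"
  by (simp cong: measurable_cong_sets)

lemma chcc_cont: "continuous_on UNIV (\<lambda>s. ch (cc s * t))"
proof -
  have "continuous_on UNIV (\<lambda>s. cc s * t)"
    by (intro continuous_on_mult cc_cont continuous_on_const)
  then show ?thesis by (rule continuous_on_compose2[OF ch_cont]) auto
qed

lemma chcc_meas[measurable]: "(\<lambda>s. ch (cc s * t)) \<in> borel_measurable P"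
  by (intro meas_P borel_measurable_continuous_onI chcc_cont)

lemma int_chm: "integrable P (\<lambda>s. (ch (cc s * t))^m)"
  by (rule TP.integrable_const_bound[of _ 1]) (auto simp: norm_power ch_le1 power_le_one)

lemma ineq1: "cmod (ch t) \<le> (\<integral>s. (cmod (ch (cc s * t)))^m \<partial>P)"
proof -
  have "cmod (ch t) = cmod (\<integral>s. (ch (cc s * t))^m \<partial>P)" by (subst F1) simp
  also have "\<dots> \<le> (\<integral>s. cmod ((ch (cc s * t))^m) \<partial>P)" by (rule integral_norm_bound)
  finally show ?thesis by (simp add: norm_power)
qed

lemma mean_id: "cinner v mu = real m * (\<integral>s. cinner (cc s * v) mu \<partial>P)"
proof -
  define e :: "nat \<Rightarrow> real" where "e n = inverse (real (Suc n))" for n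
  have e0: "e \<longlonglongrightarrow> 0" unfolding e_def by (rule LIMSEQ_inverse_real_of_nat)
  have epos: "0 < e n" for n by (simp add: e_def)
  define g where "g n s = ((ch (of_real (e n) * (cc s * v)))^m - 1) / of_real (e n)" for n s
  have gm[measurable]: "g n \<in> borel_measurable P" for n
  proof -
    have "continuous_on UNIV (\<lambda>s. of_real (e n) * (cc s * v))"
      by (intro continuous_on_mult cc_cont continuous_on_const)
    then have "continuous_on UNIV (\<lambda>s. ch (of_real (e n) * (cc s * v)))"
      by (rule continuous_on_compose2[OF ch_cont]) auto
    then have "continuous_on UNIV (g n)" unfolding g_def
      by (intro continuous_intros) (use epos[of n] in auto)
    then show ?thesis by (intro meas_P borel_measurable_continuous_onI)
  qed
  have Ig: "integral\<^sup>L P (g n) = (ch (of_real (e n) * v) - 1) / of_real (e n)" for n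
  proof -
    have cm: "cc s * (of_real (e n) * v) = of_real (e n) * (cc s * v)" for s by (simp add: mult_ac)
    have i1: "integrable P (\<lambda>s. (ch (of_real (e n) * (cc s * v)))^m)"
      using int_chm[of "of_real (e n) * v"] by (simp add: cm)
    have "integral\<^sup>L P (g n) = ((\<integral>s. (ch (of_real (e n) * (cc s * v)))^m \<partial>P) - 1) / of_real (e n)"
      unfolding g_def using i1 TP.prob_space by (simp add: Bochner_Integration.integral_diff)
    also have "(\<integral>s. (ch (of_real (e n) * (cc s * v)))^m \<partial>P) = ch (of_real (e n) * v)"
      by (subst F1) (simp add: cm)
    finally show ?thesis .
  qed
  have lim1: "(\<lambda>n. integral\<^sup>L P (g n)) \<longlonglongrightarrow> \<i> * of_real (cinner v mu)"
    unfolding Ig using ch_deriv[OF e0, of v] epos by (simp add: less_imp_neq[symmetric])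
  define f where "f s = \<i> * of_real (real m * cinner (cc s * v) mu)" for s
  have fm[measurable]: "f \<in> borel_measurable P"
  proof -
    have "continuous_on UNIV f" unfolding f_def cinner_def
      by (intro continuous_intros cc_cont)
    then show ?thesis by (intro meas_P borel_measurable_continuous_onI)
  qed
  have lim2: "(\<lambda>n. integral\<^sup>L P (g n)) \<longlonglongrightarrow> integral\<^sup>L P f"
  proof (rule integral_dominated_convergence[where w="\<lambda>_. real m * K * cmod v"])
    show "integrable P (\<lambda>_. real m * K * cmod v)" by simp
    show "AE s in P. (\<lambda>n. g n s) \<longlonglongrightarrow> f s"
    proof (intro AE_I2)
      fix s
      define w where "w = cc s * v"
      define a where "a n = ch (of_real (e n) * w)" for n
      have D: "(\<lambda>n. (a n - 1) / of_real (e n)) \<longlonglongrightarrow> \<i> * of_real (cinner w mu)"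
        unfolding a_def using ch_deriv[OF e0, of w] epos by (simp add: less_imp_neq[symmetric])
      have ae: "a n = 1 + of_real (e n) * ((a n - 1) / of_real (e n))" for n
        using epos[of n] by (simp add: field_simps)
      have "(\<lambda>n. 1 + of_real (e n) * ((a n - 1) / of_real (e n))) \<longlonglongrightarrow> 1 + of_real 0 * (\<i> * of_real (cinner w mu))"
        by (intro tendsto_intros e0 D)
      then have a1: "a \<longlonglongrightarrow> 1" using epos by (simp add: less_imp_neq[symmetric])
      have geq: "g n s = ((a n - 1) / of_real (e n)) * (\<Sum>i<m. (a n)^i)" for n
        unfolding g_def a_def w_def by (simp add: power_diff_1_eq)
      have "(\<lambda>n. ((a n - 1) / of_real (e n)) * (\<Sum>i<m. (a n)^i)) \<longlonglongrightarrow> (\<i> * of_real (cinner w mu)) * (\<Sum>i<m. 1^i)"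
        by (intro tendsto_intros D a1)
      then show "(\<lambda>n. g n s) \<longlonglongrightarrow> f s"
        unfolding geq f_def w_def by (simp add: mult_ac)
    qed
    show "AE s in P. cmod (g n s) \<le> real m * K * cmod v" for n
      using TL_AE_nonneg
    proof eventually_elim
      case (elim s)
      have a1: "cmod (ch (of_real (e n) * (cc s * v))) \<le> 1" by (rule ch_le1)
      have "cmod ((ch (of_real (e n) * (cc s * v)))^m - 1^m) \<le> real m * cmod (ch (of_real (e n) * (cc s * v)) - 1)"
        by (rule norm_power_diff) (auto simp: a1)
      also have "cmod (ch (of_real (e n) * (cc s * v)) - 1) \<le> K * cmod (of_real (e n) * (cc s * v) - 0)"
        using ch_lip[of "of_real (e n) * (cc s * v)" 0] by (simp add: ch0)
      also have "\<dots> = K * e n * exp (- Re lam * s) * cmod v"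
        using epos[of n] by (simp add: norm_mult norm_cc)
      also have "\<dots> \<le> K * e n * 1 * cmod v"
        using elim rpos epos[of n] K_nonneg
        by (intro mult_left_mono mult_right_mono) auto
      finally have "cmod ((ch (of_real (e n) * (cc s * v)))^m - 1) \<le> real m * (K * e n * cmod v)"
        by (simp add: mult_left_mono)
      then show ?case unfolding g_def norm_divide using epos[of n]
        by (simp add: field_simps)
    qed
  qed simp_all
  have "\<i> * of_real (cinner v mu) = integral\<^sup>L P f"
    using LIMSEQ_unique[OF lim1 lim2] .
  also have "\<dots> = \<i> * of_real (real m * (\<integral>s. cinner (cc s * v) mu \<partial>P))"
    unfolding f_def by (simp del: of_real_mult)
  finally have h: "\<i> * of_real (cinner v mu) = \<i> * of_real (real m * (\<integral>s. cinner (cc s * v) mu \<partial>P))" .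
  have "complex_of_real (cinner v mu) = complex_of_real (real m * (\<integral>s. cinner (cc s * v) mu \<partial>P))"
    using h by (subst (asm) mult_left_cancel) simp_all
  then show ?thesis by (rule of_real_eq_iff[THEN iffD1])
qed

lemma Im_lam: "Im lam \<noteq> 0"
proof
  assume im: "Im lam = 0"
  define r where "r = Re lam"
  have lr: "lam = of_real r" using im by (simp add: r_def complex_eq_iff)
  have ccr: "cc s = of_real (exp (- r * s))" for s
    unfolding cc_def by (simp add: lr flip: exp_of_real)
  have "cinner mu mu = real m * (\<integral>s. cinner (cc s * mu) mu \<partial>P)" by (rule mean_id)
  also have "(\<integral>s. cinner (cc s * mu) mu \<partial>P) = (\<integral>s. exp ((- r) * s) * cinner mu mu \<partial>P)"
    by (simp add: ccr cinner_scale)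
  also have "\<dots> = (\<Prod>j\<in>{1..m-1}. real j / (real j - (- r))) * cinner mu mu"
    using TL_mgf[of "- r" m] rpos by (simp add: r_def)
  finally have "cinner mu mu * 1 = cinner mu mu * (real m * (\<Prod>j\<in>{1..m-1}. real j / (real j + r)))"
    by (simp add: mult_ac)
  moreover have "cinner mu mu \<noteq> 0"
  proof -
    have "cinner mu mu = (Re mu)^2 + (Im mu)^2" by (simp add: cinner_def power2_eq_square)
    moreover have "mu \<noteq> 0" using mean by (simp add: mu_def)
    ultimately show ?thesis by (simp add: complex_eq_iff sum_power2_eq_zero_iff)
  qed
  ultimately have "real m * (\<Prod>j\<in>{1..m-1}. real j / (real j + r)) = 1" by simp
  moreover have "r \<noteq> 1" using lam1 lr by auto
  ultimately show False using prod_ne[of r m] rpos m2 by (simp add: r_def)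
qed

end

lemma AE_pos_meas:
  assumes "AE x in N. Q x" "A \<in> sets N" "0 < emeasure N A"
  shows "\<exists>x\<in>A. Q x"
proof (rule ccontr)
  assume na: "\<not> (\<exists>x\<in>A. Q x)"
  from assms(1) have ae: "AE x in N. x \<notin> A" by (rule AE_mp) (intro AE_I2 impI, use na in blast)
  have eq: "{x\<in>space N. \<not> x \<notin> A} = A" using sets.sets_into_space[OF assms(2)] by auto
  have "emeasure N A = 0" by (rule AE_iff_measurable[OF assms(2) eq, THEN iffD1, OF ae])
  then show False using assms(3) by simp
qed

lemma unit_eq:
  fixes x p :: complex
  assumes "cmod x \<le> 1" "cmod p = 1" "Re (cnj p * x) = 1"
  shows "x = p"
proof -
  have "(cmod x)^2 \<le> 1" by (rule power_le_one) (use assms(1) in auto)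
  then have a: "(Re x)^2 + (Im x)^2 \<le> 1" by (simp add: cmod_power2)
  have b: "(Re p)^2 + (Im p)^2 = 1" using assms(2) cmod_power2[of p] by simp
  have c: "Re p * Re x + Im p * Im x = 1" using assms(3) by simp
  have "(Re x - Re p)^2 + (Im x - Im p)^2 = ((Re x)^2 + (Im x)^2) - 2 * (Re p * Re x + Im p * Im x) + ((Re p)^2 + (Im p)^2)"
    by (simp add: power2_eq_square algebra_simps)
  also have "\<dots> \<le> 0" using a b c by simp
  finally have "(Re x - Re p)^2 + (Im x - Im p)^2 \<le> 0" .
  then have "Re x - Re p = 0 \<and> Im x - Im p = 0" by (simp only: sum_power2_le_zero_iff)
  then show ?thesis by (simp add: complex_eq_iff)
qed

context fp
begin

interpretation prob_space M by (rule PM)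
interpretation TP: prob_space P by (rule TL_prob)

lemma cc0: "cc 0 = 1" by (simp add: cc_def)

lemma cc_add: "cc (a + b) = cc a * cc b"
  unfolding cc_def by (simp add: algebra_simps flip: exp_add)

lemma R1:
  assumes t: "cmod (ch t) = 1" and s: "0 \<le> s"
  shows "(ch (cc s * t))^m = ch t"
proof -
  define p where "p = ch t"
  define X where "X s = (ch (cc s * t))^m" for s
  define h where "h s = 1 - Re (cnj p * X s)" for s
  have Xle: "cmod (X s) \<le> 1" for s unfolding X_def by (simp add: norm_power ch_le1 power_le_one)
  have hnn: "0 \<le> h s" for s
  proof -
    have "Re (cnj p * X s) \<le> cmod (cnj p * X s)" by (rule complex_Re_le_cmod)
    also have "\<dots> \<le> 1" using Xle[of s] t by (simp add: norm_mult p_def)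
    finally show ?thesis by (simp add: h_def)
  qed
  have hcont: "continuous_on UNIV h"
    unfolding h_def X_def by (intro continuous_intros chcc_cont)
  have intX: "integrable P X" unfolding X_def by (rule int_chm)
  have "integral\<^sup>L P h = 1 - Re (cnj p * integral\<^sup>L P X)"
  proof -
    have ir: "integrable P (\<lambda>s. Re (cnj p * X s))"
      using intX by auto
    have "integral\<^sup>L P h = 1 - (\<integral>s. Re (cnj p * X s) \<partial>P)"
      unfolding h_def using ir TP.prob_space by (simp add: Bochner_Integration.integral_diff)
    also have "(\<integral>s. Re (cnj p * X s) \<partial>P) = Re (cnj p * integral\<^sup>L P X)"
      using intX by (simp add: integral_Re)
    finally show ?thesis .
  qed
  also have "integral\<^sup>L P X = p" unfolding X_def p_def by (rule F1[symmetric])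
  moreover have "Re (cnj p * p) = 1" using t cmod_power2[of p] by (simp add: p_def power2_eq_square)
  ultimately have "integral\<^sup>L P h = 0" by simp
  moreover have hm: "h \<in> borel_measurable P" by (intro meas_P borel_measurable_continuous_onI hcont)
  moreover have "integrable P h"
  proof (rule TP.integrable_const_bound[of _ 2])
    have "h s \<le> 2" for s
    proof -
      have "\<bar>Re (cnj p * X s)\<bar> \<le> cmod (cnj p * X s)" by (rule abs_Re_le_cmod)
      also have "\<dots> \<le> 1" using Xle[of s] t by (simp add: norm_mult p_def)
      finally show ?thesis by (simp add: h_def)
    qed
    then show "AE x in P. norm (h x) \<le> 2" using hnn by (intro AE_I2) simp
  qed (rule hm)
  ultimately have AEh: "AE s in P. h s = 0"
    using hnn by (subst integral_nonneg_eq_0_iff_AE[symmetric]) auto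
  have "h s = 0"
  proof (rule ccontr)
    assume "h s \<noteq> 0"
    then have hp: "0 < h s" using hnn[of s] by simp
    have "isCont h s" using hcont by (simp add: continuous_on_eq_continuous_at)
    then obtain d where d: "0 < d" "\<And>x. dist x s < d \<Longrightarrow> dist (h x) (h s) < h s"
      unfolding continuous_at_eps_delta using hp by blast
    have "0 < emeasure P {s<..s + d/2}"
      using TL_interval_pos[OF m2 \<open>0 \<le> s\<close>] d by simp
    then obtain x where x: "x \<in> {s<..s + d/2}" "h x = 0"
      using AE_pos_meas[OF AEh, of "{s<..s + d/2}"] by auto
    have "dist x s < d" using x d by (auto simp: dist_real_def)
    then have "dist (h x) (h s) < h s" by (rule d)
    then show False using x hp by (simp add: dist_real_def)
  qed
  then have "Re (cnj p * X s) = 1" by (simp add: h_def)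
  then have "X s = p" using Xle t by (intro unit_eq) (auto simp: p_def)
  then show ?thesis by (simp add: X_def p_def)
qed

end

context fp
begin

interpretation prob_space M by (rule PM)
interpretation TP: prob_space P by (rule TL_prob)

lemma cc_split: "cc x = of_real (exp (- Re lam * x)) * exp (\<i> * of_real (Im lam * x))"
proof -
  have "exp (- cnj lam * of_real x) = exp (of_real (- Re lam * x) + \<i> * of_real (Im lam * x))"
    by (rule arg_cong[where f=exp]) (simp add: complex_eq_iff)
  also have "\<dots> = of_real (exp (- Re lam * x)) * exp (\<i> * of_real (Im lam * x))"
    by (simp only: exp_add exp_of_real)
  finally show ?thesis unfolding cc_def .
qed

lemma exp_pow_lim: "(\<lambda>n. exp (- c * real n)) \<longlonglongrightarrow> 0" if "0 < c" for c :: real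
proof -
  have "(\<lambda>n. exp (- c) ^ n) \<longlonglongrightarrow> 0" using that by (intro LIMSEQ_power_zero) auto
  moreover have "exp (- c * real n) = exp (- c) ^ n" for n
    by (subst exp_of_nat_mult[symmetric]) (simp add: mult_ac)
  ultimately show ?thesis by simp
qed

lemma R2:
  assumes t: "cmod (ch t) = 1" and s: "0 \<le> s"
  shows "ch (cc s * t) = 1"
proof -
  have eqt: "ch (cc s * t) = ch t" if s: "0 \<le> s" for s
  proof -
    have e1: "(ch (cc s * t))^m = ch t" by (rule R1[OF t s])
    have "(cmod (ch (cc s * t)))^m = 1^m" using arg_cong[OF e1, of cmod] t by (simp add: norm_power)
    then have u1: "cmod (ch (cc s * t)) = 1" using m2 by (subst (asm) power_eq_iff_eq_base) auto
    have "(ch (cc 0 * (cc s * t)))^m = ch (cc s * t)" by (rule R1[OF u1]) simp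
    then have "(ch (cc s * t))^m = ch (cc s * t)" by (simp add: cc0)
    with e1 show ?thesis by simp
  qed
  have lim0: "(\<lambda>n. cc (real n) * t) \<longlonglongrightarrow> 0"
  proof (rule tendsto_norm_zero_cancel)
    have "(\<lambda>n. exp (- Re lam * real n) * cmod t) \<longlonglongrightarrow> 0 * cmod t"
      by (intro tendsto_intros exp_pow_lim rpos)
    then show "(\<lambda>n. norm (cc (real n) * t)) \<longlonglongrightarrow> 0" by (simp add: norm_mult norm_cc)
  qed
  have "(\<lambda>n. ch (cc (real n) * t)) \<longlonglongrightarrow> ch 0"
    by (rule isCont_tendsto_compose[OF ch_isCont lim0])
  then have "(\<lambda>n. ch t) \<longlonglongrightarrow> 1" using eqt by (simp add: ch0)
  then have "ch t = 1" by (simp add: LIMSEQ_const_iff)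
  then show ?thesis using eqt[OF s] by simp
qed

lemma R3:
  assumes t: "cmod (ch t) = 1" and s0: "0 \<le> s0"
  shows "cinner (cc s0 * t) mu = 0"
proof -
  define b where "b = Im lam"
  have b: "b \<noteq> 0" using Im_lam by (simp add: b_def)
  define d where "d = 2 * pi / \<bar>b\<bar>"
  have d: "0 < d" using b by (simp add: d_def)
  define e where "e n = exp (- Re lam * (real n * d))" for n
  have epos: "0 < e n" for n by (simp add: e_def)
  have e0: "e \<longlonglongrightarrow> 0"
  proof -
    have "(\<lambda>n. exp (- (Re lam * d) * real n)) \<longlonglongrightarrow> 0" using rpos d by (intro exp_pow_lim) simp
    then show ?thesis unfolding e_def by (simp add: mult_ac)
  qed
  have rot: "exp (\<i> * of_real (Im lam * (real n * d))) = 1" for n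
  proof (cases "b > 0")
    case True
    then have eq: "Im lam * (real n * d) = 2 * real n * pi" by (simp add: b_def d_def)
    have "exp (\<i> * of_real (Im lam * (real n * d))) = exp ((2 * of_nat n * pi) * \<i>)"
      unfolding eq by (rule arg_cong[where f=exp]) (simp add: mult_ac)
    then show ?thesis using exp_integer_2pi[of "of_nat n"] by simp
  next
    case False
    then have "b < 0" using b by simp
    then have eq: "Im lam * (real n * d) = 2 * (- real n) * pi" by (simp add: b_def d_def)
    have "exp (\<i> * of_real (Im lam * (real n * d))) = exp ((2 * (- of_nat n) * pi) * \<i>)"
      unfolding eq by (rule arg_cong[where f=exp]) (simp add: mult_ac)
    then show ?thesis using exp_integer_2pi[of "- of_nat n"] by simp
  qed
  define w where "w = cc s0 * t"
  have ccn: "cc (s0 + real n * d) * t = of_real (e n) * w" for n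
    unfolding cc_add w_def using cc_split[of "real n * d"] rot[of n] by (simp add: e_def mult_ac)
  have one: "ch (of_real (e n) * w) = 1" for n
    using R2[OF t, of "s0 + real n * d"] s0 d by (simp add: ccn)
  have "(\<lambda>n. (ch (of_real (e n) * w) - 1) / of_real (e n)) \<longlonglongrightarrow> \<i> * of_real (cinner w mu)"
    by (rule ch_deriv[OF e0]) (use epos in \<open>simp add: less_imp_neq[symmetric]\<close>)
  then have "(\<lambda>n. 0) \<longlonglongrightarrow> \<i> * of_real (cinner w mu)" by (simp add: one)
  then have "\<i> * of_real (cinner w mu) = 0" by (simp add: LIMSEQ_const_iff)
  then show ?thesis by (simp add: w_def)
qed

lemma ch_lt1:
  assumes t: "t \<noteq> 0"
  shows "cmod (ch t) < 1"
proof (rule ccontr)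
  assume "\<not> cmod (ch t) < 1"
  then have t1: "cmod (ch t) = 1" using ch_le1[of t] by simp
  define b where "b = Im lam"
  have b: "b \<noteq> 0" using Im_lam by (simp add: b_def)
  define s1 where "s1 = pi / 2 / \<bar>b\<bar>"
  have s1: "0 \<le> s1" by (simp add: s1_def)
  have c0: "cinner t mu = 0" using R3[OF t1, of 0] by (simp add: cc0)
  have "cinner (cc s1 * t) mu = 0" by (rule R3[OF t1 s1])
  then have c1: "cinner (exp (\<i> * of_real (b * s1)) * t) mu = 0"
    unfolding cc_split b_def[symmetric] by (simp add: mult.assoc cinner_scale)
  have "cinner (\<i> * t) mu = 0"
  proof (cases "b > 0")
    case True
    then have bs: "b * s1 = pi / 2" by (simp add: s1_def)
    have "exp (\<i> * complex_of_real (b * s1)) = \<i>" unfolding bs by (simp only: cis_conv_exp[symmetric] cis_pi_half)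
    then show ?thesis using c1 by simp
  next
    case False
    then have "b < 0" using b by simp
    then have bs: "b * s1 = - (pi / 2)" by (simp add: s1_def)
    have "exp (\<i> * complex_of_real (b * s1)) = - \<i>" unfolding bs
      by (simp only: cis_conv_exp[symmetric] cis_minus_pi_half)
    then have "cinner (- (\<i> * t)) mu = 0" using c1 by simp
    then show ?thesis by (simp add: cinner_def)
  qed
  with c0 have "Re (cnj t * mu) = 0" "Im (cnj t * mu) = 0"
    by (auto simp: cinner_def algebra_simps)
  then have "cnj t * mu = 0" by (simp add: complex_eq_iff)
  moreover have "mu \<noteq> 0" using mean by (simp add: mu_def)
  ultimately show False using t by simp
qed

end

context fp
begin

interpretation prob_space M by (rule PM)
interpretation TP: prob_space P by (rule TL_prob)

definition psi :: "real \<Rightarrow> real" where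
  "psi r = (SUP t\<in>sphere 0 r. cmod (ch t))"

lemma bdd_ch: "bdd_above ((\<lambda>t. cmod (ch t)) ` A)"
  using ch_le1 by (intro bdd_aboveI[of _ 1]) auto

lemma psi_attained:
  assumes "0 \<le> r" shows "\<exists>t. cmod t = r \<and> psi r = cmod (ch t)"
proof -
  have ne: "sphere (0::complex) r \<noteq> {}" using assms by simp
  have "continuous_on (sphere 0 r) (\<lambda>t. cmod (ch t))"
    by (intro continuous_on_norm continuous_on_subset[OF ch_cont]) auto
  then obtain t where t: "t \<in> sphere 0 r" "\<And>y. y \<in> sphere 0 r \<Longrightarrow> cmod (ch y) \<le> cmod (ch t)"
    using continuous_attains_sup[OF compact_sphere ne] by blast
  have "psi r = cmod (ch t)" unfolding psi_def
    by (rule cSup_eq_maximum) (use t in auto)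
  then show ?thesis using t by auto
qed

lemma ch_le_psi: "cmod (ch t) \<le> psi (cmod t)"
  unfolding psi_def by (rule cSUP_upper[OF _ bdd_ch]) simp

lemma psi_le1: "0 \<le> r \<Longrightarrow> psi r \<le> 1"
  using psi_attained ch_le1 by metis

lemma psi_nonneg: "0 \<le> r \<Longrightarrow> 0 \<le> psi r"
  using psi_attained by (metis norm_ge_zero)

lemma psi_lt1: "0 < r \<Longrightarrow> psi r < 1"
  using psi_attained[of r] ch_lt1 by (metis less_eq_real_def norm_zero not_less_iff_gr_or_eq)

lemma psi_lip_aux:
  assumes r: "0 \<le> r" and r': "0 \<le> r'"
  shows "psi r \<le> psi r' + K * \<bar>r - r'\<bar>"
proof -
  obtain t where t: "cmod t = r" "psi r = cmod (ch t)" using psi_attained[OF r] by blast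
  define t' where "t' = (if r = 0 then of_real r' else of_real (r' / r) * t)"
  have nt': "cmod t' = r'" using t r r' by (auto simp: t'_def norm_mult norm_divide)
  have dt: "cmod (t - t') = \<bar>r - r'\<bar>"
  proof (cases "r = 0")
    case True then show ?thesis using t r' by (simp add: t'_def)
  next
    case False
    then have "t - t' = of_real (1 - r'/r) * t" by (simp add: t'_def algebra_simps)
    then have "cmod (t - t') = \<bar>1 - r'/r\<bar> * r" using t by (simp only: norm_mult norm_of_real)
    also have "\<dots> = \<bar>(r - r')/r\<bar> * r" using False by (simp add: diff_divide_distrib)
    also have "\<dots> = \<bar>r - r'\<bar>" using False r by (simp add: abs_divide)
    finally show ?thesis .
  qed
  have "psi r = cmod (ch t)" by (rule t(2))
  also have "\<dots> \<le> cmod (ch t') + cmod (ch t - ch t')" by (rule norm_triangle_sub)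
  also have "\<dots> \<le> psi r' + K * \<bar>r - r'\<bar>"
    using ch_le_psi[of t'] ch_lip[of t t'] nt' dt by simp
  finally show ?thesis .
qed

lemma psi_cont: "continuous_on {0..} psi"
proof -
  have "K-lipschitz_on {0..} psi"
  proof (rule lipschitz_onI)
    fix x y :: real assume "x \<in> {0..}" "y \<in> {0..}"
    then have "psi x \<le> psi y + K * \<bar>x - y\<bar>" "psi y \<le> psi x + K * \<bar>y - x\<bar>"
      by (auto intro!: psi_lip_aux)
    then show "dist (psi x) (psi y) \<le> K * dist x y" by (simp add: dist_real_def abs_minus_commute)
  qed (rule K_nonneg)
  then show ?thesis by (rule lipschitz_on_continuous_on)
qed

lemma ineq_psi:
  assumes "AE s in P. (cmod (ch (cc s * t)))^m \<le> g s" "integrable P g"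
  shows "cmod (ch t) \<le> integral\<^sup>L P g"
proof -
  have "cmod (ch t) \<le> (\<integral>s. (cmod (ch (cc s * t)))^m \<partial>P)" by (rule ineq1)
  also have "\<dots> \<le> integral\<^sup>L P g"
  proof (rule integral_mono_AE[OF _ assms(2) assms(1)])
    show "integrable P (\<lambda>s. cmod (ch (cc s * t)) ^ m)" using integrable_norm[OF int_chm[of t]] by (simp add: norm_power)
  qed
  finally show ?thesis .
qed

lemma ch_cc_le: "cmod (ch (cc s * t)) \<le> psi (exp (- Re lam * s) * cmod t)"
  using ch_le_psi[of "cc s * t"] by (simp add: norm_mult norm_cc)

end

lemma aux_pow:
  fixes x y :: real
  assumes x: "0 \<le> x" "x \<le> 1" and y: "0 \<le> y" "y \<le> 1/2" "y \<le> 1 - x" and m: "2 \<le> m"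
  shows "x^m \<le> 1 - 3/2 * y"
proof -
  have "x^m \<le> x^2" by (rule power_decreasing[OF m]) (use x in auto)
  moreover have "x^2 \<le> 1 - 3/2 * y"
  proof (cases "x \<le> 1/2")
    case True
    then have "x^2 \<le> (1/2)^2" using x by (intro power_mono) auto
    then have "x^2 \<le> 1/4" by (simp add: power2_eq_square)
    then show ?thesis using y by linarith
  next
    case False
    have h: "0 \<le> y * (x - 1/2)" using False y by (intro mult_nonneg_nonneg) auto
    have "y * (1 + x) = 3/2 * y + y * (x - 1/2)" by (simp add: algebra_simps)
    then have "3/2 * y \<le> y * (1 + x)" using h by linarith
    also have "\<dots> \<le> (1 - x) * (1 + x)" using y x by (intro mult_right_mono) auto
    finally show ?thesis by (simp add: power2_eq_square algebra_simps)
  qed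
  ultimately show ?thesis by simp
qed

context fp
begin

interpretation prob_space M by (rule PM)
interpretation TP: prob_space P by (rule TL_prob)

lemma exists_S: "\<exists>S. 2/3 < measure P {..S}"
proof -
  have lim: "(\<lambda>n. measure P {..real n}) \<longlonglongrightarrow> measure P (\<Union>n. {..real n})"
    by (rule TP.finite_Lim_measure_incseq) (auto simp: incseq_def)
  have "(\<Union>n. {..real n}) = UNIV"
    by (auto intro: real_nat_ceiling_ge)
  then have "measure P (\<Union>n. {..real n}) = 1" using TP.prob_space by simp
  then have "eventually (\<lambda>n. 2/3 < measure P {..real n}) sequentially"
    using order_tendstoD(1)[OF lim, of "2/3"] by simp
  then show ?thesis by (auto simp: eventually_sequentially)
qed

lemma growth: "\<exists>c>0. c \<le> 1/2 \<and> (\<forall>r\<ge>1. psi r \<le> 1 - c)"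
proof -
  obtain S where S: "2/3 < measure P {..S}" using exists_S by blast
  define R0 where "R0 = max 1 (exp (Re lam * S))"
  have R0: "1 \<le> R0" "exp (Re lam * S) \<le> R0" by (auto simp: R0_def)
  have pc: "continuous_on A (\<lambda>r. 1 - psi r)" if "A \<subseteq> {0..}" for A
    by (intro continuous_intros continuous_on_subset[OF psi_cont that])
  obtain r0 where r0: "r0 \<in> {1..R0}" "\<And>y. y \<in> {1..R0} \<Longrightarrow> 1 - psi r0 \<le> 1 - psi y"
    using continuous_attains_inf[OF compact_Icc _ pc[of "{1..R0}"]] R0 by auto
  define c0 where "c0 = 1 - psi r0"
  have c0: "0 < c0" using psi_lt1[of r0] r0 by (simp add: c0_def)
  define c where "c = min c0 (1/2)"
  have c: "0 < c" "c \<le> 1/2" using c0 by (auto simp: c_def)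
  have main: "c \<le> 1 - psi r" if r: "1 \<le> r" for r
  proof -
    obtain rs where rs: "rs \<in> {1..r}" "\<And>y. y \<in> {1..r} \<Longrightarrow> 1 - psi rs \<le> 1 - psi y"
      using continuous_attains_inf[OF compact_Icc _ pc[of "{1..r}"]] r by auto
    define J where "J = 1 - psi rs"
    have "c \<le> J"
    proof (rule ccontr)
      assume "\<not> c \<le> J"
      then have Jc: "J < c" by simp
      have Jpos: "0 < J" using psi_lt1[of rs] rs by (simp add: J_def)
      have rsR0: "R0 < rs"
      proof (rule ccontr)
        assume "\<not> R0 < rs"
        then have "rs \<in> {1..R0}" using rs by auto
        then have "c0 \<le> J" using r0(2) by (simp add: c0_def J_def)
        then show False using Jc by (simp add: c_def)
      qed
      obtain t where t: "cmod t = rs" "psi rs = cmod (ch t)"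
        using psi_attained[of rs] rs by auto
      define g where "g s = 1 - 3/2 * J * indicator {..S} s" for s
      have ii: "integrable P (indicator {..S} :: real \<Rightarrow> real)"
        by (rule TP.integrable_const_bound[of _ 1]) auto
      have gint: "integrable P g" unfolding g_def
        by (intro Bochner_Integration.integrable_diff integrable_mult_right ii) auto
      have "cmod (ch t) \<le> integral\<^sup>L P g"
      proof (rule ineq_psi[OF _ gint])
        show "AE s in P. (cmod (ch (cc s * t)))^m \<le> g s"
          using TL_AE_nonneg
        proof eventually_elim
          case (elim s)
          define x where "x = cmod (ch (cc s * t))"
          have x: "0 \<le> x" "x \<le> 1" using ch_le1 by (auto simp: x_def)
          show ?case
          proof (cases "s \<le> S")
            case False
            then have "x^m \<le> 1" using x by (simp add: power_le_one)
            then show ?thesis using False by (simp add: g_def x_def)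
          next
            case True
            define rr where "rr = exp (- Re lam * s) * rs"
            have rr1: "rr \<le> rs"
              using elim rpos rs by (simp add: rr_def mult_le_cancel_right1)
            have "1 \<le> exp (- Re lam * S) * exp (Re lam * S)" by (simp flip: exp_add)
            also have "\<dots> \<le> exp (- Re lam * s) * rs"
              using True rpos rsR0 R0
              by (intro mult_mono) (auto intro: order_trans)
            finally have rr0: "1 \<le> rr" by (simp add: rr_def)
            have "x \<le> psi rr" unfolding x_def rr_def using ch_cc_le[of s t] t by simp
            moreover have "J \<le> 1 - psi rr" unfolding J_def
              using rs(2)[of rr] rr0 rr1 rs(1) by auto
            ultimately have "J \<le> 1 - x" by simp
            then have "x^m \<le> 1 - 3/2 * J"
              using x Jpos Jc c m2 by (intro aux_pow) auto
            then show ?thesis using True by (simp add: g_def x_def)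
          qed
        qed
      qed
      also have "integral\<^sup>L P g = 1 - 3/2 * J * measure P {..S}"
        unfolding g_def using TP.prob_space ii
        by (subst Bochner_Integration.integral_diff) auto
      finally have "psi rs \<le> 1 - 3/2 * J * measure P {..S}" using t by simp
      moreover have "J < 3/2 * J * measure P {..S}"
      proof -
        have "J = 3/2 * J * (2/3)" by simp
        also have "\<dots> < 3/2 * J * measure P {..S}" using S Jpos by (intro mult_strict_left_mono) auto
        finally show ?thesis .
      qed
      ultimately show False by (simp add: J_def)
    qed
    also have "J \<le> 1 - psi r" using rs r by (auto simp: J_def)
    finally show ?thesis .
  qed
  show ?thesis
  proof (intro exI[of _ c] conjI allI impI c)
    fix r :: real assume "1 \<le> r"
    then show "psi r \<le> 1 - c" using main[of r] by linarith
  qed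
qed

end

lemma exp_powr': "(exp y * x) powr z = exp (y * z) * x powr z" if "0 < x" for x y z :: real
  using that by (simp add: powr_def ln_mult distrib_left exp_add mult_ac)

context fp
begin

interpretation prob_space M by (rule PM)
interpretation TP: prob_space P by (rule TL_prob)

lemma decay:
  assumes r0: "1 \<le> r0" and q: "0 \<le> q" and b: "0 < b" "b * Re lam < 1"
    and th: "q^(m-1) * (\<integral>s. exp (b * Re lam * s) \<partial>P) < 1"
    and bound: "\<And>r. r0 \<le> r \<Longrightarrow> psi r \<le> q"
  shows "\<exists>C. \<forall>r\<ge>r0. psi r \<le> C * r powr (-b)"
proof -
  define E where "E = (\<integral>s. exp (b * Re lam * s) \<partial>P)"
  have Eint: "integrable P (\<lambda>s. exp (b * Re lam * s))" using TL_mgf(1)[OF b(2)] by simp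
  have Epos: "0 < E"
  proof -
    have "0 \<le> E" unfolding E_def by simp
    moreover have "E = (\<Prod>j\<in>{1..m-1}. real j / (real j - b * Re lam))"
      unfolding E_def using TL_mgf(2)[OF b(2)] by simp
    moreover have "0 < (\<Prod>j\<in>{1..m-1}. real j / (real j - b * Re lam))"
      using b by (intro prod_pos) (auto intro!: divide_pos_pos)
    ultimately show ?thesis by simp
  qed
  define \<theta> where "\<theta> = q^(m-1) * E"
  have \<theta>: "\<theta> < 1" "0 \<le> \<theta>" using th q Epos by (auto simp: \<theta>_def E_def)
  define C where "C = r0 powr b * E / (1 - \<theta>)"
  have key: "psi r * r powr b \<le> C" if r: "r0 \<le> r" for r
  proof -
    define f where "f x = psi x * x powr b" for x
    have fc: "continuous_on {r0..r} f" unfolding f_def using r0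
      by (intro continuous_intros continuous_on_subset[OF psi_cont]) auto
    obtain rs where rs: "rs \<in> {r0..r}" "\<And>y. y \<in> {r0..r} \<Longrightarrow> f y \<le> f rs"
      using continuous_attains_sup[OF compact_Icc _ fc] r by auto
    define B where "B = f rs"
    have rspos: "0 < rs" using rs r0 by auto
    have Bnn: "0 \<le> B" using rspos psi_nonneg[of rs] by (simp add: B_def f_def)
    obtain t where t: "cmod t = rs" "psi rs = cmod (ch t)"
      using psi_attained[of rs] rspos by auto
    define g where "g s = (r0 powr b + q^(m-1) * B) * rs powr (-b) * exp (b * Re lam * s)" for s
    have gint: "integrable P g" unfolding g_def using Eint by simp
    have "cmod (ch t) \<le> integral\<^sup>L P g"
    proof (rule ineq_psi[OF _ gint])
      show "AE s in P. (cmod (ch (cc s * t)))^m \<le> g s"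
        using TL_AE_nonneg
      proof eventually_elim
        case (elim s)
        define x where "x = cmod (ch (cc s * t))"
        have x: "0 \<le> x" "x \<le> 1" using ch_le1 by (auto simp: x_def)
        define rr where "rr = exp (- Re lam * s) * rs"
        have rrpos: "0 < rr" using rspos by (simp add: rr_def)
        have rr1: "rr \<le> rs"
          using elim rpos rspos by (simp add: rr_def mult_le_cancel_right1)
        have xle: "x \<le> psi rr" unfolding x_def rr_def using ch_cc_le[of s t] t by simp
        have rrp: "rr powr (-b) = exp (b * Re lam * s) * rs powr (-b)"
          unfolding rr_def using exp_powr'[OF rspos, of "- Re lam * s" "-b"] by (simp add: mult_ac)
        have gnn: "0 \<le> q^(m-1) * B * rs powr (-b) * exp (b * Re lam * s)"
          using q Bnn by simp
        show ?case
        proof (cases "rr < r0")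
          case True
          have "x^m \<le> 1" using x by (simp add: power_le_one)
          also have "1 \<le> r0 powr b * rr powr (-b)"
          proof -
            have "rr powr b \<le> r0 powr b" using True rrpos b by (intro powr_mono2) auto
            then have "rr powr b * rr powr (-b) \<le> r0 powr b * rr powr (-b)"
              by (intro mult_right_mono) auto
            then show ?thesis using rrpos by (simp add: powr_add[symmetric])
          qed
          also have "\<dots> = r0 powr b * rs powr (-b) * exp (b * Re lam * s)"
            by (simp add: rrp mult_ac)
          also have "\<dots> \<le> g s" using gnn by (simp add: g_def algebra_simps)
          finally show ?thesis by (simp add: x_def)
        next
          case False
          then have rr0: "r0 \<le> rr" by simp
          have psq: "psi rr \<le> q" by (rule bound[OF rr0])
          have pnn: "0 \<le> psi rr" using rrpos by (simp add: psi_nonneg)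
          have "x^m = x^(m-1) * x" using m2 by (simp add: power_Suc2[symmetric] del: power_Suc2)
          also have "\<dots> \<le> q^(m-1) * psi rr"
            using x xle psq pnn by (intro mult_mono power_mono) auto
          also have "psi rr = f rr * rr powr (-b)" using rrpos by (simp add: f_def powr_minus field_simps)
          also have "f rr \<le> B" unfolding B_def using rs rr0 rr1 by (intro rs(2)) auto
          then have "q^(m-1) * (f rr * rr powr (-b)) \<le> q^(m-1) * (B * rr powr (-b))"
            using q by (intro mult_left_mono mult_right_mono) auto
          also have "\<dots> = q^(m-1) * B * rs powr (-b) * exp (b * Re lam * s)"
            by (simp add: rrp mult_ac)
          also have "\<dots> \<le> g s" unfolding g_def using b
            by (simp add: algebra_simps)
          finally show ?thesis by (simp add: x_def)
        qed
      qed
    qed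
    also have "integral\<^sup>L P g = (r0 powr b + q^(m-1) * B) * rs powr (-b) * E"
      unfolding g_def E_def by simp
    finally have "psi rs \<le> (r0 powr b + q^(m-1) * B) * rs powr (-b) * E" using t by simp
    then have "psi rs * rs powr b \<le> (r0 powr b + q^(m-1) * B) * rs powr (-b) * E * rs powr b"
      by (intro mult_right_mono) auto
    also have "\<dots> = (r0 powr b + q^(m-1) * B) * E"
      using rspos by (simp add: powr_minus field_simps)
    finally have "B \<le> r0 powr b * E + \<theta> * B" by (simp add: B_def f_def \<theta>_def algebra_simps)
    then have "B * (1 - \<theta>) \<le> r0 powr b * E" by (simp add: algebra_simps)
    then have "B \<le> C" using \<theta> by (simp add: C_def field_simps)
    moreover have "f r \<le> B" unfolding B_def using r by (intro rs(2)) auto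
    ultimately show ?thesis by (simp add: f_def)
  qed
  show ?thesis
  proof (intro exI[of _ C] allI impI)
    fix r assume r: "r0 \<le> r"
    then have rp: "0 < r" using r0 by simp
    have "psi r * r powr b \<le> C" by (rule key[OF r])
    then have "psi r * r powr b * r powr (-b) \<le> C * r powr (-b)" by (intro mult_right_mono) auto
    then show "psi r \<le> C * r powr (-b)" using rp by (simp add: powr_minus field_simps)
  qed
qed

end

context fp
begin

interpretation prob_space M by (rule PM)
interpretation TP: prob_space P by (rule TL_prob)

lemma Ec_pos: "c < 1 \<Longrightarrow> 0 < (\<integral>s. exp (c * s) \<partial>P)"
  using TL_mgf(2)[of c m] by (auto intro!: prod_pos divide_pos_pos)

lemma final:
  assumes a: "0 < a" "a < 1 / Re lam"
  shows "\<exists>C R. \<forall>r\<ge>R. psi r \<le> C * r powr (-a)"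
proof -
  have aR: "a * Re lam < 1" using a rpos by (simp add: field_simps)
  obtain c where c: "0 < c" "c \<le> 1/2" "\<And>r. 1 \<le> r \<Longrightarrow> psi r \<le> 1 - c"
    using growth by blast
  define b where "b = c / (2 * Re lam)"
  have b: "0 < b" "b * Re lam < 1" "b * Re lam = c/2" using c rpos by (auto simp: b_def)
  have th: "(1 - c)^(m-1) * (\<integral>s. exp (b * Re lam * s) \<partial>P) < 1"
  proof -
    have "(1 - c)^(m-1) * (\<integral>s. exp (b * Re lam * s) \<partial>P)
        = (\<Prod>j\<in>{1..m-1}. (1 - c)) * (\<Prod>j\<in>{1..m-1}. real j / (real j - c/2))"
    proof -
      have E: "(\<integral>s. exp (b * Re lam * s) \<partial>P) = (\<Prod>j\<in>{1..m-1}. real j / (real j - c/2))"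
        using TL_mgf(2)[OF b(2), of m] unfolding b(3) .
      show ?thesis unfolding E by simp
    qed
    also have "\<dots> = (\<Prod>j\<in>{1..m-1}. (1 - c) * (real j / (real j - c/2)))"
      by (simp only: prod.distrib)
    also have "\<dots> < (\<Prod>j\<in>{1..m-1}. 1)"
    proof (rule prod_mono_strict[of 1])
      show "1 \<in> {1..m-1}" using m2 by auto
      show "(1 - c) * (real 1 / (real 1 - c / 2)) < 1" using c by (simp add: field_simps)
      show "\<And>i. i \<in> {1..m-1} \<Longrightarrow> 0 \<le> (1 - c) * (real i / (real i - c / 2)) \<and> (1 - c) * (real i / (real i - c / 2)) \<le> 1"
      proof -
        fix i assume i: "i \<in> {1..m-1}"
        then have i1: "1 \<le> real i" by auto
        have d: "0 < real i - c/2" using i1 c by simp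
        have "(1 - c) * real i \<le> real i - c/2" using i1 c by (simp add: algebra_simps mult_left_mono)
        then have "(1 - c) * (real i / (real i - c / 2)) \<le> 1" using d by (simp add: field_simps)
        moreover have "0 \<le> (1 - c) * (real i / (real i - c / 2))" using d c i1 by simp
        ultimately show "0 \<le> (1 - c) * (real i / (real i - c / 2)) \<and> (1 - c) * (real i / (real i - c / 2)) \<le> 1" by simp
      qed
    qed auto
    finally show ?thesis by simp
  qed
  obtain C1 where C1: "\<And>r. 1 \<le> r \<Longrightarrow> psi r \<le> C1 * r powr (-b)"
    using decay[OF order_refl _ b(1,2) th] c by fastforce
  define Ea where "Ea = (\<integral>s. exp (a * Re lam * s) \<partial>P)"
  have Ea: "0 < Ea" unfolding Ea_def using Ec_pos[OF aR] by simp
  define q where "q = min (1/2) (1 / (2 * Ea))"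
  have q: "0 < q" "q \<le> 1/2" "q * Ea \<le> 1/2" using Ea by (auto simp: q_def min_def field_simps)
  have thq: "q^(m-1) * Ea < 1"
  proof -
    have "q^(m-1) \<le> q^1" using q m2 by (intro power_decreasing) auto
    then have "q^(m-1) * Ea \<le> q * Ea" using Ea by (intro mult_right_mono) auto
    then show ?thesis using q by simp
  qed
  define C1' where "C1' = max C1 1"
  have C1': "0 < C1'" "C1 \<le> C1'" by (auto simp: C1'_def)
  define X where "X = (C1' / q) powr (1 / b)"
  have Xpos: "0 < X" using C1' q by (simp add: X_def)
  define r0 where "r0 = max 1 X"
  have r0: "1 \<le> r0" "X \<le> r0" by (auto simp: r0_def)
  have bq: "psi r \<le> q" if r: "r0 \<le> r" for r
  proof -
    have r1: "1 \<le> r" using r r0 by simp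
    have "psi r \<le> C1 * r powr (-b)" by (rule C1[OF r1])
    also have "\<dots> \<le> C1' * r powr (-b)" using C1' by (intro mult_right_mono) auto
    also have "r powr (-b) \<le> X powr (-b)"
      using r r0 Xpos b by (intro powr_mono2') auto
    then have "C1' * r powr (-b) \<le> C1' * X powr (-b)" using C1' by (intro mult_left_mono) auto
    also have "X powr (-b) = (C1' / q) powr (- 1)"
      unfolding X_def using b by (simp add: powr_powr)
    also have "C1' * (C1' / q) powr (- 1) = q"
      using C1' q by (simp add: powr_minus field_simps)
    finally show ?thesis .
  qed
  obtain C where "\<And>r. r0 \<le> r \<Longrightarrow> psi r \<le> C * r powr (-a)"
    using decay[OF r0(1) _ a(1) aR _ bq] q thq by (auto simp: Ea_def)
  then show ?thesis by blast
qed

end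

theorem lemma7p5:
  fixes M :: "'a measure" and Z :: "'a \<Rightarrow> complex" and m :: nat and lam :: complex
    and \<phi> :: "complex \<Rightarrow> complex" and \<psi> :: "real \<Rightarrow> real" and a :: real
  assumes "m \<ge> 2"
    and "lam \<noteq> 1" and "Re lam > 0"
    and "prob_space M"
    and "Z \<in> borel_measurable M"
    and "integrable M Z"
    and "(\<integral>x. Z x \<partial>M) \<noteq> 0"
    and "distr M borel Z = fixpoint_rhs_law m lam (distr M borel Z)"
    and "\<And>t. \<phi> t = (\<integral>x. exp (\<i> * complex_of_real (cinner t (Z x))) \<partial>M)"
    and "\<And>r. r \<ge> 0 \<Longrightarrow> \<psi> r = (SUP t\<in>sphere 0 r. cmod (\<phi> t))"
    and "0 < a" and "a < 1 / Re lam"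
  shows "\<psi> \<in> O(\<lambda>r. r powr (- a))"
proof -
  interpret fp M Z m lam
    by (intro fp.intro assms(1-8))
  have phi: "\<phi> = ch" by (rule ext) (simp add: assms(9) ch_def)
  have ps: "\<psi> r = psi r" if "0 \<le> r" for r using assms(10)[OF that] by (simp add: psi_def phi)
  obtain C R where CR: "\<And>r. R \<le> r \<Longrightarrow> psi r \<le> C * r powr (-a)"
    using final[OF assms(11,12)] by blast
  show ?thesis
  proof (rule bigoI[where c = "\<bar>C\<bar>"])
    show "eventually (\<lambda>r. norm (\<psi> r) \<le> \<bar>C\<bar> * norm (r powr (-a))) at_top"
      unfolding eventually_at_top_linorder
    proof (intro exI[of _ "max R 1"] allI impI)
      fix r :: real assume r: "max R 1 \<le> r"
      then have r0: "0 \<le> r" "R \<le> r" by auto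
      have "norm (\<psi> r) = psi r" using r0 psi_nonneg[of r] by (simp add: ps)
      also have "\<dots> \<le> C * r powr (-a)" by (rule CR[OF r0(2)])
      also have "\<dots> \<le> \<bar>C\<bar> * r powr (-a)" by (intro mult_right_mono) auto
      also have "\<dots> = \<bar>C\<bar> * norm (r powr (-a))" by simp
      finally show "norm (\<psi> r) \<le> \<bar>C\<bar> * norm (r powr (-a))" .
    qed
  qed
qed


end
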